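(* Let $I_5$ be the edgeless graph on $5$ vertices. Then $\lim_{n\to\infty}\sqrt[n]{b_{I_5}(n)}=3^{1/4}$.
   Context: For a graph $G$, $\mathrm{cl}(G)$ denotes its clique complex. For a finite simple graph $H$ and a fixed field $\mathbb{K}$, $b_H(n)=\max_G \sum_{i\ge -1}\dim_{\mathbb{K}}\widetilde H_i(\mathrm{cl}(G);\mathbb{K})$, where $G$ ranges over all simple graphs on at most $n$ vertices containing no induced copy of $H$ (reduced homology, the empty graph contributing $1$). *)

theory Defs
  imports Complex_Main "HOL-Library.Function_Algebras"
begin

definition simple_graph :: "'a set \<Rightarrow> ('a \<Rightarrow> 'a \<Rightarrow> bool) \<Rightarrow> bool" where
  "simple_graph V E \<longleftrightarrow> finite V \<and> (\<forall>x y. E x y \<longrightarrow> x \<in> V \<and> y \<in> V)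
     \<and> (\<forall>x. \<not> E x x) \<and> (\<forall>x y. E x y \<longrightarrow> E y x)"

definition has_induced_copy ::
  "'b set \<Rightarrow> ('b \<Rightarrow> 'b \<Rightarrow> bool) \<Rightarrow> 'a set \<Rightarrow> ('a \<Rightarrow> 'a \<Rightarrow> bool) \<Rightarrow> bool" where
  "has_induced_copy VH EH V E \<longleftrightarrow>
     (\<exists>f. inj_on f VH \<and> f ` VH \<subseteq> V \<and> (\<forall>a\<in>VH. \<forall>b\<in>VH. EH a b \<longleftrightarrow> E (f a) (f b)))"

definition I5_V :: "nat set" where "I5_V = {..<5}"
definition I5_E :: "nat \<Rightarrow> nat \<Rightarrow> bool" where "I5_E = (\<lambda>_ _. False)"

text \<open>Faces of the clique complex with k vertices (dimension k-1); k = 0 gives the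
  empty face, which realises the augmentation (reduced homology).\<close>
definition faces :: "nat set \<Rightarrow> (nat \<Rightarrow> nat \<Rightarrow> bool) \<Rightarrow> nat \<Rightarrow> nat set set" where
  "faces V E k = {S. finite S \<and> S \<subseteq> V \<and> card S = k \<and> (\<forall>x\<in>S. \<forall>y\<in>S. x \<noteq> y \<longrightarrow> E x y)}"

definition chains :: "'k::field itself \<Rightarrow> nat set \<Rightarrow> (nat \<Rightarrow> nat \<Rightarrow> bool) \<Rightarrow> nat \<Rightarrow> (nat set \<Rightarrow> 'k) set" where
  "chains K V E k = {f. \<forall>S. S \<notin> faces V E k \<longrightarrow> f S = 0}"

text \<open>Boundary map from chains on k-vertex faces to chains on (k-1)-vertex faces
  (vertices ordered by the order on nat); for k = 0 it is the zero map.\<close>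
definition boundary :: "nat set \<Rightarrow> (nat \<Rightarrow> nat \<Rightarrow> bool) \<Rightarrow> nat \<Rightarrow> (nat set \<Rightarrow> 'k::field) \<Rightarrow> (nat set \<Rightarrow> 'k)" where
  "boundary V E k f = (\<lambda>T. if k = 0 then 0 else if T \<in> faces V E (k - 1) then
       (\<Sum>v\<in>{v \<in> V - T. insert v T \<in> faces V E k}.
          (-1) ^ card {u\<in>T. u < v} * f (insert v T)) else 0)"

abbreviation fscale :: "'k::field \<Rightarrow> (nat set \<Rightarrow> 'k) \<Rightarrow> (nat set \<Rightarrow> 'k)" where
  "fscale c f \<equiv> (\<lambda>x. c * f x)"

text \<open>Reduced Betti number in dimension k-1: dim ker(boundary_k) - dim im(boundary_(k+1)).\<close>
definition red_betti :: "'k::field itself \<Rightarrow> nat set \<Rightarrow> (nat \<Rightarrow> nat \<Rightarrow> bool) \<Rightarrow> nat \<Rightarrow> nat" where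
  "red_betti K V E k =
     vector_space.dim (fscale :: 'k \<Rightarrow> _) {f \<in> chains K V E k. boundary V E k f = 0}
   - vector_space.dim (fscale :: 'k \<Rightarrow> _) (boundary V E (Suc k) ` chains K V E (Suc k))"

text \<open>Total reduced Betti number (faces have at most card V vertices).\<close>
definition total_red_betti :: "'k::field itself \<Rightarrow> nat set \<Rightarrow> (nat \<Rightarrow> nat \<Rightarrow> bool) \<Rightarrow> nat" where
  "total_red_betti K V E = (\<Sum>k\<le>card V. red_betti K V E k)"

text \<open>b_H(n): graphs on at most n vertices are taken (up to isomorphism) on vertex sets V \<subseteq> {..<n}.\<close>
definition bH :: "'k::field itself \<Rightarrow> 'b set \<Rightarrow> ('b \<Rightarrow> 'b \<Rightarrow> bool) \<Rightarrow> nat \<Rightarrow> nat" where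
  "bH K VH EH n = Max {total_red_betti K V E | V E.
      V \<subseteq> {..<n} \<and> simple_graph V E \<and> \<not> has_induced_copy VH EH V E}"

end

theory Submission imports Defs "HOL-Library.FuncSet" begin

context vector_space begin

lemma dim_mono_fin:
  assumes "S \<subseteq> T" "T \<subseteq> span F" "finite F"
  shows "dim S \<le> dim T"
proof -
  obtain B where B: "B \<subseteq> S" "independent B" "S \<subseteq> span B" "card B = dim S"
    using basis_exists by blast
  obtain B' where B': "B \<subseteq> B'" "B' \<subseteq> T" "independent B'" "T \<subseteq> span B'"
    using maximal_independent_subset_extend[of B T] B assms(1) by blast
  have "finite B'" using independent_span_bound[OF assms(3) B'(3)] B'(2) assms(2) by blast
  moreover have "card B' = dim T" using basis_card_eq_dim B' by blast
  ultimately show ?thesis using B(4) card_mono[OF _ B'(1)] by simp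
qed

lemma indep_card_le_dim_fin:
  assumes "B \<subseteq> T" "independent B" "T \<subseteq> span F" "finite F"
  shows "card B \<le> dim T"
proof -
  obtain B' where B': "B \<subseteq> B'" "B' \<subseteq> T" "independent B'" "T \<subseteq> span B'"
    using maximal_independent_subset_extend[of B T] assms by blast
  have "finite B'" using independent_span_bound[OF assms(4) B'(3)] B'(2) assms(3) by blast
  moreover have "card B' = dim T" using basis_card_eq_dim B' by blast
  ultimately show ?thesis using card_mono[OF _ B'(1)] by simp
qed

lemma rank_nullity_le:
  assumes lin: "module_hom scale scale f" and S: "subspace S" and F: "S \<subseteq> span F" "finite F"
  shows "dim S \<le> dim (S \<inter> {x. f x = 0}) + dim (f ` S)"
proof -
  let ?K = "S \<inter> {x. f x = 0}"
  obtain B0 where B0: "B0 \<subseteq> ?K" "independent B0" "?K \<subseteq> span B0" "card B0 = dim ?K"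
    using basis_exists by blast
  have fB0: "finite B0" using independent_span_bound[OF F(2) B0(2)] B0(1) F(1) by blast
  have spimg: "\<And>A. span (f ` A) = f ` span A"
    using lin by (simp add: module_hom.span_image)
  have fS: "f ` S \<subseteq> span (f ` F)" using F(1) spimg by auto
  obtain D where D: "D \<subseteq> f ` S" "independent D" "f ` S \<subseteq> span D" "card D = dim (f ` S)"
    using basis_exists by blast
  have fD: "finite D" using independent_span_bound[OF _ D(2)] D(1) fS F(2) by blast
  define g where "g d = (SOME c. c \<in> S \<and> f c = d)" for d
  have g: "g d \<in> S \<and> f (g d) = d" if "d \<in> D" for d
    unfolding g_def by (rule someI_ex) (use that D(1) in auto)
  let ?C = "g ` D"
  have fC: "f ` ?C = D" using g by force
  have CS: "span ?C \<subseteq> S" using g S by (intro span_minimal) auto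
  have "S \<subseteq> span (B0 \<union> ?C)"
  proof
    fix x assume x: "x \<in> S"
    have "f x \<in> f ` span ?C" using D(3) x spimg[of ?C] fC by auto
    then obtain y where y: "y \<in> span ?C" "f y = f x" by auto
    have "y \<in> S" using y CS by auto
    have "f (x - y) = 0" using y lin by (simp add: module_hom.diff)
    hence "x - y \<in> ?K" using x \<open>y \<in> S\<close> S by (simp add: subspace_diff)
    hence "x - y \<in> span (B0 \<union> ?C)" using B0(3) span_mono[of B0 "B0 \<union> ?C"] by auto
    moreover have "y \<in> span (B0 \<union> ?C)" using y(1) span_mono[of ?C "B0 \<union> ?C"] by auto
    ultimately have "(x - y) + y \<in> span (B0 \<union> ?C)" by (rule span_add)
    thus "x \<in> span (B0 \<union> ?C)" by simp
  qed
  hence "dim S \<le> card (B0 \<union> ?C)" using fB0 fD by (intro dim_le_card) auto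
  also have "\<dots> \<le> card B0 + card ?C" by (rule card_Un_le)
  also have "\<dots> \<le> card B0 + card D" using card_image_le[OF fD] by simp
  finally show ?thesis using B0(4) D(4) by simp
qed

lemma rank_nullity_ge:
  assumes lin: "module_hom scale scale f" and S: "subspace S" and F: "S \<subseteq> span F" "finite F"
  shows "dim (S \<inter> {x. f x = 0}) + dim (f ` S) \<le> dim S"
proof -
  let ?K = "S \<inter> {x. f x = 0}"
  obtain B0 where B0: "B0 \<subseteq> ?K" "independent B0" "?K \<subseteq> span B0" "card B0 = dim ?K"
    using basis_exists by blast
  obtain B where B: "B0 \<subseteq> B" "B \<subseteq> S" "independent B" "S \<subseteq> span B"
    using maximal_independent_subset_extend[of B0 S] B0 by blast
  have fB: "finite B" using independent_span_bound[OF F(2) B(3)] B(2) F(1) by blast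
  have dS: "card B = dim S" using basis_card_eq_dim B by blast
  have spimg: "\<And>A. span (f ` A) = f ` span A"
    using lin by (simp add: module_hom.span_image)
  let ?C = "B - B0"
  have "f ` B \<subseteq> insert 0 (f ` ?C)" using B0(1) by auto
  hence "span (f ` B) \<subseteq> span (f ` ?C)"
    using span_mono[of "f ` B" "insert 0 (f ` ?C)"] by simp
  hence "f ` S \<subseteq> span (f ` ?C)" using B(4) spimg[of B] by auto
  hence "dim (f ` S) \<le> card (f ` ?C)" using fB by (intro dim_le_card) auto
  also have "\<dots> \<le> card ?C" using fB by (intro card_image_le) auto
  also have "\<dots> = card B - card B0" using B(1) fB by (simp add: card_Diff_subset finite_subset)
  finally show ?thesis using B0(4) dS card_mono[OF fB B(1)] by simp
qed

end

interpretation FV: vector_space "fscale :: 'k::field \<Rightarrow> (nat set \<Rightarrow> 'k) \<Rightarrow> _"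
  by unfold_locales (auto simp: algebra_simps)

lemma sum_fun_apply: "(sum g A) x = sum (\<lambda>a. g a x) A"
  by (induction A rule: infinite_finite_induct) auto

definition ind :: "nat set \<Rightarrow> nat set \<Rightarrow> 'k::field" where
  "ind S = (\<lambda>T. if T = S then 1 else 0)"

definition Zs :: "'k::field itself \<Rightarrow> nat set \<Rightarrow> (nat \<Rightarrow> nat \<Rightarrow> bool) \<Rightarrow> nat \<Rightarrow> (nat set \<Rightarrow> 'k) set" where
  "Zs K V E k = {f \<in> chains K V E k. boundary V E k f = 0}"

definition Bs :: "'k::field itself \<Rightarrow> nat set \<Rightarrow> (nat \<Rightarrow> nat \<Rightarrow> bool) \<Rightarrow> nat \<Rightarrow> (nat set \<Rightarrow> 'k) set" where
  "Bs K V E k = boundary V E (Suc k) ` chains K V E (Suc k)"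

lemma red_betti_alt: "red_betti K V E k = FV.dim (Zs K V E k) - FV.dim (Bs K V E k)"
  unfolding red_betti_def Zs_def Bs_def by simp

lemma faces_finite: "finite V \<Longrightarrow> finite (faces V E k)"
  by (rule finite_subset[of _ "Pow V"]) (auto simp: faces_def)

lemma chains_subspace: "FV.subspace (chains K V E k)"
  unfolding FV.subspace_def chains_def by auto

lemma chains_span:
  fixes K :: "'k::field itself"
  assumes "finite V"
  shows "chains K V E k \<subseteq> FV.span (ind ` faces V E k)"
proof
  fix f :: "nat set \<Rightarrow> 'k" assume f: "f \<in> chains K V E k"
  have "f = (\<Sum>S\<in>faces V E k. fscale (f S) (ind S))"
  proof
    fix T
    show "f T = (\<Sum>S\<in>faces V E k. fscale (f S) (ind S)) T"
      using f faces_finite[OF assms] by (auto simp: sum_fun_apply ind_def chains_def if_distrib sum.delta' cong: if_cong)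
  qed
  also have "\<dots> \<in> FV.span (ind ` faces V E k)"
    by (intro FV.span_sum FV.span_scale FV.span_base) auto
  finally show "f \<in> FV.span (ind ` faces V E k)" .
qed

lemma boundary_add: "boundary V E k (f + g) = boundary V E k f + boundary V E k g"
  by (rule ext) (simp add: boundary_def sum.distrib distrib_left)

lemma boundary_scale: "boundary V E k (fscale c f) = fscale c (boundary V E k f)"
  by (rule ext) (simp add: boundary_def sum_distrib_left mult.left_commute)

lemma boundary_hom: "module_hom fscale fscale (boundary V E k :: (nat set \<Rightarrow> 'k::field) \<Rightarrow> _)"
  unfolding module_hom_iff using FV.module_axioms
  by (simp add: boundary_add boundary_scale)

lemma boundary_neg: "boundary V E k (- f) = - boundary V E k f"
  using module_hom.neg[OF boundary_hom] by blast

lemma boundary_chains: "boundary V E k f \<in> chains K V E (k - 1)"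
  by (auto simp: boundary_def chains_def)

lemma Zs_subspace: "FV.subspace (Zs K V E k)"
proof -
  have "Zs K V E k = chains K V E k \<inter> {f. boundary V E k f = 0}" by (auto simp: Zs_def)
  thus ?thesis using FV.subspace_inter[OF chains_subspace module_hom.subspace_kernel[OF boundary_hom]]
    by simp
qed

lemma Bs_subspace: "FV.subspace (Bs K V E k)"
  unfolding Bs_def by (rule module_hom.subspace_image[OF boundary_hom chains_subspace])


definition Nb :: "(nat \<Rightarrow> nat \<Rightarrow> bool) \<Rightarrow> nat set \<Rightarrow> nat \<Rightarrow> nat set" where
  "Nb E V v = {w\<in>V. w \<noteq> v \<and> E v w \<and> E w v}"

definition pr :: "nat \<Rightarrow> (nat set \<Rightarrow> 'k::field) \<Rightarrow> (nat set \<Rightarrow> 'k)" where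
  "pr v f = (\<lambda>\<sigma>. if v \<in> \<sigma> then 0 else (-1) ^ card {u\<in>\<sigma>. u < v} * f (insert v \<sigma>))"

lemma faces_sub_iff: "W \<subseteq> V \<Longrightarrow> S \<in> faces W E k \<longleftrightarrow> S \<in> faces V E k \<and> S \<subseteq> W"
  by (auto simp: faces_def)

lemma faces_remove:
  assumes "S \<in> faces V E (Suc k)" "v \<in> S"
  shows "S - {v} \<in> faces (Nb E V v) E k"
  using assms by (auto simp: faces_def Nb_def)

lemma faces_insert:
  assumes "\<sigma> \<in> faces (Nb E V v) E k" "v \<in> V"
  shows "insert v \<sigma> \<in> faces V E (Suc k)" "v \<notin> \<sigma>"
proof -
  show "v \<notin> \<sigma>" using assms by (auto simp: faces_def Nb_def)
  thus "insert v \<sigma> \<in> faces V E (Suc k)" using assms by (auto simp: faces_def Nb_def)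
qed

lemma card_less_insert:
  assumes "finite \<sigma>" "w \<notin> \<sigma>"
  shows "card {u\<in>insert w \<sigma>. u < v} = (if w < v then Suc (card {u\<in>\<sigma>. u < v}) else card {u\<in>\<sigma>. u < v})"
proof -
  have "{u\<in>insert w \<sigma>. u < v} = (if w < v then insert w {u\<in>\<sigma>. u < v} else {u\<in>\<sigma>. u < v})"
    by auto
  thus ?thesis using assms by simp
qed

lemma neg1_sq: "((-1::'k::field) ^ n) * (-1) ^ n = 1"
  by (simp add: power_mult_distrib[symmetric])

lemma pr_add: "pr v (f + g) = pr v f + pr v g"
  by (rule ext) (simp add: pr_def distrib_left)

lemma pr_scale: "pr v (fscale c f) = fscale c (pr v f)"
  by (rule ext) (simp add: pr_def mult.left_commute)

lemma pr_hom: "module_hom fscale fscale (pr v :: (nat set \<Rightarrow> 'k::field) \<Rightarrow> _)"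
  unfolding module_hom_iff using FV.module_axioms
  by (simp add: pr_add pr_scale)

lemma pr_zero_iff:
  fixes f :: "nat set \<Rightarrow> 'k::field"
  assumes f: "f \<in> chains K V E k" and v: "v \<in> V"
  shows "pr v f = 0 \<longleftrightarrow> f \<in> chains K (V - {v}) E k"
proof
  assume 0: "pr v f = 0"
  show "f \<in> chains K (V - {v}) E k"
    unfolding chains_def
  proof (intro CollectI allI impI)
    fix S assume S: "S \<notin> faces (V - {v}) E k"
    show "f S = 0"
    proof (cases "S \<in> faces V E k")
      case False thus ?thesis using f by (auto simp: chains_def)
    next
      case True
      hence "v \<in> S" using S by (auto simp: faces_def)
      have "pr v f (S - {v}) = 0" using 0 by simp
      hence "(-1) ^ card {u\<in>S - {v}. u < v} * f (insert v (S - {v})) = 0"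
        by (simp add: pr_def)
      thus ?thesis using \<open>v \<in> S\<close> by (simp add: insert_absorb)
    qed
  qed
next
  assume f': "f \<in> chains K (V - {v}) E k"
  show "pr v f = 0"
  proof
    fix \<sigma>
    have "insert v \<sigma> \<notin> faces (V - {v}) E k" by (auto simp: faces_def)
    thus "pr v f \<sigma> = 0 \<sigma>" using f' by (simp add: pr_def chains_def)
  qed
qed

lemma boundary_del:
  fixes f :: "nat set \<Rightarrow> 'k::field"
  assumes fin: "finite V" and f: "f \<in> chains K (V - {v}) E k"
  shows "boundary V E k f = boundary (V - {v}) E k f"
proof
  fix T
  let ?A1 = "{w \<in> V - T. insert w T \<in> faces V E k}"
  let ?A2 = "{w \<in> V - {v} - T. insert w T \<in> faces (V - {v}) E k}"
  let ?t = "\<lambda>w. (-1) ^ card {u\<in>T. u < w} * f (insert w T)"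
  have sub: "V - {v} \<subseteq> V" by auto
  show "boundary V E k f T = boundary (V - {v}) E k f T"
  proof (cases "k = 0")
    case True thus ?thesis by (simp add: boundary_def)
  next
    case k: False
    show ?thesis
    proof (cases "T \<in> faces (V - {v}) E (k - 1)")
      case True
      hence T: "T \<in> faces V E (k - 1)" by (auto simp: faces_def)
      have "sum ?t ?A1 = sum ?t ?A2"
      proof (rule sum.mono_neutral_right)
        show "finite ?A1" using fin by auto
        show "?A2 \<subseteq> ?A1" by (auto simp: faces_def)
        show "\<forall>w\<in>?A1 - ?A2. ?t w = 0"
        proof
          fix w assume w: "w \<in> ?A1 - ?A2"
          have "insert w T \<notin> faces (V - {v}) E k"
            using w by (auto simp: faces_def)
          thus "?t w = 0" using f by (simp add: chains_def)
        qed
      qed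
      moreover have "boundary V E k f T = sum ?t ?A1"
        unfolding boundary_def using T k by (simp only: if_True if_False simp_thms)
      moreover have "boundary (V - {v}) E k f T = sum ?t ?A2"
        unfolding boundary_def using True k by (simp only: if_True if_False simp_thms)
      ultimately show ?thesis by (simp only:)
    next
      case False
      show ?thesis
      proof (cases "T \<in> faces V E (k - 1)")
        case True
        hence "v \<in> T" using False by (auto simp: faces_def)
        have "sum ?t ?A1 = 0"
        proof (rule sum.neutral, rule ballI)
          fix w assume "w \<in> ?A1"
          have "insert w T \<notin> faces (V - {v}) E k" using \<open>v \<in> T\<close> by (auto simp: faces_def)
          thus "?t w = 0" using f by (simp add: chains_def)
        qed
        moreover have "boundary V E k f T = sum ?t ?A1"
          unfolding boundary_def using True k by (simp only: if_True if_False simp_thms)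
        moreover have "boundary (V - {v}) E k f T = 0"
          unfolding boundary_def using False k by (simp only: if_True if_False simp_thms)
        ultimately show ?thesis by (simp only:)
      next
        case False2: False
        thus ?thesis using False by (simp add: boundary_def)
      qed
    qed
  qed
qed

lemma pr_chains:
  fixes f :: "nat set \<Rightarrow> 'k::field"
  assumes f: "f \<in> chains K V E (Suc k)"
  shows "pr v f \<in> chains K (Nb E V v) E k"
  unfolding chains_def
proof (intro CollectI allI impI)
  fix \<sigma> assume \<sigma>: "\<sigma> \<notin> faces (Nb E V v) E k"
  show "pr v f \<sigma> = 0"
  proof (cases "v \<in> \<sigma>")
    case True thus ?thesis by (simp add: pr_def)
  next
    case False
    have "insert v \<sigma> \<notin> faces V E (Suc k)"
      using faces_remove[of "insert v \<sigma>" V E k v] False \<sigma> by auto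
    thus ?thesis using f False by (simp add: pr_def chains_def)
  qed
qed

lemma pr_surj:
  fixes g :: "nat set \<Rightarrow> 'k::field"
  assumes g: "g \<in> chains K (Nb E V v) E k" and v: "v \<in> V"
  shows "\<exists>f\<in>chains K V E (Suc k). pr v f = g"
proof -
  define f where "f S = (if v \<in> S then (-1) ^ card {u\<in>S - {v}. u < v} * g (S - {v}) else 0)" for S
  have "f \<in> chains K V E (Suc k)"
    unfolding chains_def
  proof (intro CollectI allI impI)
    fix S assume S: "S \<notin> faces V E (Suc k)"
    show "f S = 0"
    proof (cases "v \<in> S")
      case True
      have "S - {v} \<notin> faces (Nb E V v) E k"
        using faces_insert(1)[of "S - {v}" E V v k] v S True by (auto simp: insert_absorb)
      thus ?thesis using g True by (simp add: f_def chains_def)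
    qed (simp add: f_def)
  qed
  moreover have "pr v f = g"
  proof
    fix \<sigma>
    show "pr v f \<sigma> = g \<sigma>"
    proof (cases "v \<in> \<sigma>")
      case True
      have "\<sigma> \<notin> faces (Nb E V v) E k" using True by (auto simp: faces_def Nb_def)
      thus ?thesis using True g by (simp add: pr_def chains_def)
    next
      case False
      hence "insert v \<sigma> - {v} = \<sigma>" by auto
      thus ?thesis using False by (simp add: pr_def f_def mult.assoc[symmetric] neg1_sq)
    qed
  qed
  ultimately show ?thesis by blast
qed


lemma pr_boundary:
  fixes f :: "nat set \<Rightarrow> 'k::field"
  assumes v: "v \<in> V" and f: "f \<in> chains K V E (Suc k)"
  shows "pr v (boundary V E (Suc k) f) = - boundary (Nb E V v) E k (pr v f)"
proof
  fix \<sigma>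
  let ?N = "Nb E V v"
  show "pr v (boundary V E (Suc k) f) \<sigma> = (- boundary ?N E k (pr v f)) \<sigma>"
  proof (cases "v \<in> \<sigma>")
    case True
    have "\<sigma> \<notin> faces ?N E (k-1)" using True by (auto simp: faces_def Nb_def)
    thus ?thesis using True by (simp add: pr_def boundary_def)
  next
    case vs: False
    show ?thesis
    proof (cases k)
      case 0
      have "insert v \<sigma> \<notin> faces V E 0" by (auto simp: faces_def)
      thus ?thesis using vs 0 by (simp add: pr_def boundary_def)
    next
      case (Suc j)
      show ?thesis
      proof (cases "\<sigma> \<in> faces ?N E j")
        case False
        have "insert v \<sigma> \<notin> faces V E (Suc j)"
          using faces_remove[of "insert v \<sigma>" V E j v] vs False by auto
        thus ?thesis using vs Suc False by (simp add: pr_def boundary_def)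
      next
        case True
        have ins: "insert v \<sigma> \<in> faces V E (Suc j)" using faces_insert(1)[OF True v] .
        have fins: "finite \<sigma>" using True by (simp add: faces_def)
        let ?A = "{w \<in> V - insert v \<sigma>. insert w (insert v \<sigma>) \<in> faces V E (Suc (Suc j))}"
        let ?B = "{w \<in> ?N - \<sigma>. insert w \<sigma> \<in> faces ?N E (Suc j)}"
        have AB: "?A = ?B"
        proof (intro set_eqI iffI)
          fix w assume w: "w \<in> ?A"
          then have "insert w (insert v \<sigma>) - {v} \<in> faces ?N E (Suc j)"
            by (intro faces_remove) auto
          moreover have "insert w (insert v \<sigma>) - {v} = insert w \<sigma>" using w vs by auto
          ultimately show "w \<in> ?B" using w by (auto simp: faces_def)
        next
          fix w assume w: "w \<in> ?B"
          have "insert v (insert w \<sigma>) \<in> faces V E (Suc (Suc j))"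
            using faces_insert(1)[of "insert w \<sigma>" E V v "Suc j"] w v by auto
          then show "w \<in> ?A" using w by (auto simp: Nb_def insert_commute)
        qed
        define s where "s = card {u\<in>\<sigma>. u < v}"
        have "pr v (boundary V E (Suc k) f) \<sigma> = (-1)^s * (\<Sum>w\<in>?A. (-1)^card {u \<in> insert v \<sigma>. u < w} * f (insert w (insert v \<sigma>)))"
          using vs ins Suc by (simp add: pr_def boundary_def s_def)
        also have "\<dots> = (\<Sum>w\<in>?B. (-1)^s * ((-1)^card {u \<in> insert v \<sigma>. u < w} * f (insert w (insert v \<sigma>))))"
          unfolding AB by (simp add: sum_distrib_left)
        also have "\<dots> = (\<Sum>w\<in>?B. - ((-1)^card {u\<in>\<sigma>. u < w} * pr v f (insert w \<sigma>)))"
        proof (rule sum.cong[OF refl])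
          fix w assume w: "w \<in> ?B"
          have wv: "w \<noteq> v" "w \<notin> \<sigma>" using w by (auto simp: Nb_def)
          have c1: "card {u \<in> insert v \<sigma>. u < w} = (if v < w then Suc (card {u\<in>\<sigma>. u < w}) else card {u\<in>\<sigma>. u < w})"
            using card_less_insert[OF fins vs] .
          have c2: "card {u \<in> insert w \<sigma>. u < v} = (if w < v then Suc s else s)"
            using card_less_insert[OF fins wv(2)] s_def by simp
          have p: "pr v f (insert w \<sigma>) = (-1)^card {u \<in> insert w \<sigma>. u < v} * f (insert w (insert v \<sigma>))"
            using wv vs by (simp add: pr_def insert_commute)
          show "(-1)^s * ((-1)^card {u \<in> insert v \<sigma>. u < w} * f (insert w (insert v \<sigma>)))
                = - ((-1)^card {u\<in>\<sigma>. u < w} * pr v f (insert w \<sigma>))"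
          proof (cases "v < w")
            case True
            hence "\<not> w < v" by simp
            thus ?thesis using True unfolding p c1 c2 by simp
          next
            case False
            hence "w < v" using wv(1) by simp
            thus ?thesis using False unfolding p c1 c2 by simp
          qed
        qed
        also have "\<dots> = - boundary ?N E k (pr v f) \<sigma>"
          using Suc True by (simp add: boundary_def sum_negf)
        finally show ?thesis by simp
      qed
    qed
  qed
qed


lemma chains_mono:
  assumes "W \<subseteq> V" shows "chains K W E k \<subseteq> chains K V E k"
proof -
  have "faces W E k \<subseteq> faces V E k" using assms by (auto simp: faces_def)
  thus ?thesis by (auto simp: chains_def)
qed

lemma Zs_chains: "Zs K V E k \<subseteq> chains K V E k"
  by (auto simp: Zs_def)

lemma Bs_chains: "Bs K V E k \<subseteq> chains K V E k"
  using boundary_chains[where K=K and V=V and E=E and k="Suc k"] by (auto simp: Bs_def)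

lemma pr_zero: "pr v 0 = 0"
  by (rule ext) (simp add: pr_def)

lemma betti_step_Suc:
  fixes K :: "'k::field itself"
  assumes fin: "finite V" and v: "v \<in> V"
  shows "red_betti K V E (Suc j) \<le> red_betti K (V - {v}) E (Suc j) + red_betti K (Nb E V v) E j"
proof -
  let ?D = "V - {v}" and ?N = "Nb E V v"
  have finD: "finite ?D" and finN: "finite ?N" using fin by (auto simp: Nb_def)
  let ?ZX = "Zs K V E (Suc j)" and ?BX = "Bs K V E (Suc j)"
  let ?ZD = "Zs K ?D E (Suc j)" and ?BD = "Bs K ?D E (Suc j)"
  let ?ZN = "Zs K ?N E j" and ?BN = "Bs K ?N E j"
  let ?ker = "{x. pr v x = 0}"
  have spX: "chains K V E (Suc j) \<subseteq> FV.span (ind ` faces V E (Suc j))"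
    using chains_span[OF fin] .
  have spD: "chains K ?D E (Suc j) \<subseteq> FV.span (ind ` faces ?D E (Suc j))"
    using chains_span[OF finD] .
  have spN: "chains K ?N E j \<subseteq> FV.span (ind ` faces ?N E j)"
    using chains_span[OF finN] .
  have fX: "finite (ind ` faces V E (Suc j))" using faces_finite[OF fin] by simp
  have fD: "finite (ind ` faces ?D E (Suc j))" using faces_finite[OF finD] by simp
  have fN: "finite (ind ` faces ?N E j)" using faces_finite[OF finN] by simp
  have 1: "FV.dim ?ZX \<le> FV.dim (?ZX \<inter> ?ker) + FV.dim (pr v ` ?ZX)"
    by (rule FV.rank_nullity_le[OF pr_hom Zs_subspace _ fX]) (use Zs_chains spX in blast)
  have "?ZX \<inter> ?ker \<subseteq> ?ZD"
  proof
    fix x assume x: "x \<in> ?ZX \<inter> ?ker"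
    hence xc: "x \<in> chains K V E (Suc j)" "boundary V E (Suc j) x = 0" "pr v x = 0"
      by (auto simp: Zs_def)
    hence xd: "x \<in> chains K ?D E (Suc j)" using pr_zero_iff[OF xc(1) v] by simp
    show "x \<in> ?ZD" using xd xc boundary_del[OF fin xd] by (simp add: Zs_def)
  qed
  hence 2: "FV.dim (?ZX \<inter> ?ker) \<le> FV.dim ?ZD"
    by (rule FV.dim_mono_fin[OF _ _ fD]) (use Zs_chains spD in blast)
  have "pr v ` ?ZX \<subseteq> ?ZN"
  proof
    fix y assume "y \<in> pr v ` ?ZX"
    then obtain x where x: "x \<in> chains K V E (Suc j)" "boundary V E (Suc j) x = 0" "y = pr v x"
      by (auto simp: Zs_def)
    have "boundary ?N E j (pr v x) = - pr v (boundary V E (Suc j) x)"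
      using pr_boundary[OF v x(1)] by simp
    thus "y \<in> ?ZN" using x pr_chains[OF x(1)] by (simp add: Zs_def pr_zero)
  qed
  hence 3: "FV.dim (pr v ` ?ZX) \<le> FV.dim ?ZN"
    by (rule FV.dim_mono_fin[OF _ _ fN]) (use Zs_chains spN in blast)
  have BXc: "?BX \<subseteq> chains K V E (Suc j)" by (rule Bs_chains)
  have 4: "FV.dim (?BX \<inter> ?ker) + FV.dim (pr v ` ?BX) \<le> FV.dim ?BX"
    by (rule FV.rank_nullity_ge[OF pr_hom Bs_subspace _ fX]) (use BXc spX in blast)
  have "?BD \<subseteq> ?BX \<inter> ?ker"
  proof
    fix y assume "y \<in> ?BD"
    then obtain x where x: "x \<in> chains K ?D E (Suc (Suc j))" "y = boundary ?D E (Suc (Suc j)) x"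
      by (auto simp: Bs_def)
    have xV: "x \<in> chains K V E (Suc (Suc j))" using chains_mono[of ?D V] x(1) by blast
    have yx: "y = boundary V E (Suc (Suc j)) x" using boundary_del[OF fin x(1)] x(2) by simp
    have yD: "y \<in> chains K ?D E (Suc j)" using x(2) boundary_chains[where K=K and V="?D" and E=E and k="Suc (Suc j)"] by simp
    have yV: "y \<in> chains K V E (Suc j)" using chains_mono[of ?D V] yD by blast
    have "pr v y = 0" using pr_zero_iff[OF yV v] yD by simp
    moreover have "y \<in> ?BX" using xV yx by (auto simp: Bs_def)
    ultimately show "y \<in> ?BX \<inter> ?ker" by simp
  qed
  hence 5: "FV.dim ?BD \<le> FV.dim (?BX \<inter> ?ker)"
    by (rule FV.dim_mono_fin[OF _ _ fX]) (use BXc spX in blast)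
  have prBX: "pr v ` ?BX \<subseteq> chains K ?N E j" using BXc pr_chains by blast
  have "?BN \<subseteq> pr v ` ?BX"
  proof
    fix y assume "y \<in> ?BN"
    then obtain g where g: "g \<in> chains K ?N E (Suc j)" "y = boundary ?N E (Suc j) g"
      by (auto simp: Bs_def)
    have "- g \<in> chains K ?N E (Suc j)" using g(1) by (auto simp: chains_def)
    then obtain f where f: "f \<in> chains K V E (Suc (Suc j))" "pr v f = - g"
      using pr_surj[OF _ v] by blast
    have "pr v (boundary V E (Suc (Suc j)) f) = y"
      using pr_boundary[OF v f(1)] f(2) g(2) by (simp add: boundary_neg)
    moreover have "boundary V E (Suc (Suc j)) f \<in> ?BX" using f(1) by (auto simp: Bs_def)
    ultimately show "y \<in> pr v ` ?BX" by blast
  qed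
  hence 6: "FV.dim ?BN \<le> FV.dim (pr v ` ?BX)"
    by (rule FV.dim_mono_fin[OF _ _ fN]) (use prBX spN in blast)
  show ?thesis unfolding red_betti_alt using 1 2 3 4 5 6 by linarith
qed

lemma faces_zero: "faces V E 0 = {{}}"
  by (auto simp: faces_def)

lemma betti_step_0:
  fixes K :: "'k::field itself"
  assumes fin: "finite V"
  shows "red_betti K V E 0 \<le> red_betti K (V - {v}) E 0"
proof -
  let ?D = "V - {v}"
  have "chains K V E 0 = chains K ?D E 0" by (simp add: chains_def faces_zero)
  hence Z: "Zs K V E 0 = Zs K ?D E 0" by (simp add: Zs_def boundary_def)
  have "Bs K ?D E 0 \<subseteq> Bs K V E 0"
  proof
    fix y assume "y \<in> Bs K ?D E 0"
    then obtain x where x: "x \<in> chains K ?D E 1" "y = boundary ?D E 1 x"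
      by (auto simp: Bs_def)
    have "x \<in> chains K V E 1" using chains_mono[of ?D V] x(1) by blast
    moreover have "y = boundary V E 1 x" using boundary_del[OF fin x(1)] x(2) by simp
    ultimately show "y \<in> Bs K V E 0" by (auto simp: Bs_def)
  qed
  hence "FV.dim (Bs K ?D E 0) \<le> FV.dim (Bs K V E 0)"
    by (rule FV.dim_mono_fin[OF _ _ finite_imageI[OF faces_finite[OF fin]]])
       (use Bs_chains chains_span[OF fin] in blast)
  thus ?thesis unfolding red_betti_alt Z by linarith
qed


lemma red_betti_big:
  fixes K :: "'k::field itself"
  assumes fin: "finite V" and k: "card V < k"
  shows "red_betti K V E k = 0"
proof -
  have "faces V E k = {}"
  proof (rule equals0I)
    fix S assume "S \<in> faces V E k"
    hence S: "S \<subseteq> V" "card S = k" by (auto simp: faces_def)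
    hence "card S \<le> card V" using card_mono[OF fin] by blast
    thus False using S(2) k by simp
  qed
  hence "Zs K V E k \<subseteq> FV.span {}" using Zs_chains[of K V E k] chains_span[OF fin, of K E k] by auto
  hence "FV.dim (Zs K V E k) \<le> card ({} :: (nat set \<Rightarrow> 'k) set)" by (intro FV.dim_le_card) auto
  thus ?thesis unfolding red_betti_alt by simp
qed

lemma tb_sum:
  fixes K :: "'k::field itself"
  assumes fin: "finite V" and M: "card V \<le> M"
  shows "total_red_betti K V E = (\<Sum>k\<le>M. red_betti K V E k)"
  unfolding total_red_betti_def
proof (rule sum.mono_neutral_left)
  show "\<forall>i\<in>{..M} - {..card V}. red_betti K V E i = 0"
  proof
    fix i assume "i \<in> {..M} - {..card V}"
    hence "card V < i" by auto
    thus "red_betti K V E i = 0" by (rule red_betti_big[OF fin])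
  qed
qed (use M in auto)

lemma key_ineq:
  fixes K :: "'k::field itself"
  assumes fin: "finite V" and v: "v \<in> V"
  shows "total_red_betti K V E \<le> total_red_betti K (V - {v}) E + total_red_betti K (Nb E V v) E"
proof -
  obtain n where n: "card V = Suc n" using v fin by (metis card_Suc_Diff1)
  have cD: "card (V - {v}) = n" using n v fin by simp
  have "Nb E V v \<subseteq> V - {v}" by (auto simp: Nb_def)
  hence cN: "card (Nb E V v) \<le> n" using cD card_mono[of "V - {v}"] fin by auto
  have finN: "finite (Nb E V v)" using fin by (auto simp: Nb_def)
  have "total_red_betti K V E = red_betti K V E 0 + (\<Sum>j\<le>n. red_betti K V E (Suc j))"
    unfolding total_red_betti_def n by (rule sum.atMost_Suc_shift)
  also have "\<dots> \<le> red_betti K (V - {v}) E 0 + (\<Sum>j\<le>n. red_betti K (V - {v}) E (Suc j) + red_betti K (Nb E V v) E j)"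
    using betti_step_0[OF fin, of K E v] betti_step_Suc[OF fin v, of K E]
    by (intro add_mono sum_mono) auto
  also have "\<dots> = (red_betti K (V - {v}) E 0 + (\<Sum>j\<le>n. red_betti K (V - {v}) E (Suc j))) + (\<Sum>j\<le>n. red_betti K (Nb E V v) E j)"
    by (simp add: sum.distrib)
  also have "red_betti K (V - {v}) E 0 + (\<Sum>j\<le>n. red_betti K (V - {v}) E (Suc j)) = (\<Sum>k\<le>Suc n. red_betti K (V - {v}) E k)"
    by (rule sum.atMost_Suc_shift[symmetric])
  also have "\<dots> = total_red_betti K (V - {v}) E" using tb_sum[of "V - {v}" "Suc n" K E] fin cD by simp
  also have "(\<Sum>j\<le>n. red_betti K (Nb E V v) E j) = total_red_betti K (Nb E V v) E"
    using tb_sum[OF finN cN, of K] by simp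
  finally show ?thesis .
qed

lemma tb_single:
  fixes K :: "'k::field itself"
  shows "total_red_betti K {v} E = 0"
proof -
  define e :: "nat set \<Rightarrow> 'k" where "e = ind {}"
  define a :: "nat set \<Rightarrow> 'k" where "a = ind {v}"
  have f0: "faces {v} E 0 = {{}}" by (rule faces_zero)
  have f1: "faces {v} E 1 = {{v}}"
    by (auto simp: faces_def card_Suc_eq)
  have ba: "boundary {v} E 1 a = e"
  proof
    fix T
    show "boundary {v} E 1 a T = e T"
    proof (cases "T = {}")
      case True
      have "{w \<in> {v} - {}. insert w {} \<in> faces {v} E 1} = {v}" using f1 by auto
      thus ?thesis using True f0 by (simp add: boundary_def a_def e_def ind_def)
    next
      case False thus ?thesis using f0 by (simp add: boundary_def e_def ind_def)
    qed
  qed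
  have ach: "a \<in> chains K {v} E 1" using f1 by (auto simp: chains_def a_def ind_def)
  have "Zs K {v} E 1 \<subseteq> FV.span {}"
  proof
    fix f :: "nat set \<Rightarrow> 'k" assume f: "f \<in> Zs K {v} E 1"
    have fa: "f = fscale (f {v}) a"
    proof
      fix S show "f S = fscale (f {v}) a S"
        using f f1 by (auto simp: Zs_def chains_def a_def ind_def)
    qed
    have "boundary {v} E 1 f = boundary {v} E 1 (fscale (f {v}) a)" using fa by (rule arg_cong)
    also have "\<dots> = fscale (f {v}) (boundary {v} E 1 a)" by (rule boundary_scale)
    also have "\<dots> = fscale (f {v}) e" by (simp only: ba)
    finally have "boundary {v} E 1 f = fscale (f {v}) e" .
    hence "fscale (f {v}) e = 0" using f by (simp add: Zs_def)
    hence "f {v} * e {} = 0" using fun_cong[of "fscale (f {v}) e" 0 "{}"] by simp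
    hence fv0: "f {v} = 0" by (simp add: e_def ind_def)
    have "f = fscale (f {v}) a" by (rule fa)
    also have "\<dots> = fscale 0 a" by (simp only: fv0)
    also have "\<dots> = 0" by (simp add: fun_eq_iff)
    finally have "f = 0" .
    thus "f \<in> FV.span {}" by simp
  qed
  hence "FV.dim (Zs K {v} E 1) \<le> card ({} :: (nat set \<Rightarrow> 'k) set)" by (intro FV.dim_le_card) auto
  hence b1: "red_betti K {v} E 1 = 0" unfolding red_betti_alt by simp
  have "Zs K {v} E 0 \<subseteq> FV.span {e}"
    using Zs_chains[of K "{v}" E 0] chains_span[of "{v}" K E 0] f0 unfolding e_def by auto
  hence z0: "FV.dim (Zs K {v} E 0) \<le> 1" using FV.dim_le_card[of "Zs K {v} E 0" "{e}"] by simp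
  have eB: "e \<in> Bs K {v} E 0" using ach ba by (auto simp: Bs_def)
  have "e \<noteq> 0" by (simp add: e_def ind_def fun_eq_iff)
  hence ind: "FV.independent {e}" using FV.dependent_single by blast
  have "card {e} \<le> FV.dim (Bs K {v} E 0)"
  proof (rule FV.indep_card_le_dim_fin[OF _ ind])
    show "{e} \<subseteq> Bs K {v} E 0" using eB by simp
    show "Bs K {v} E 0 \<subseteq> FV.span (ind ` faces {v} E 0)"
      using Bs_chains[of K "{v}" E 0] chains_span[of "{v}" K E 0] by auto
    show "finite (ind ` faces {v} E 0 :: (nat set \<Rightarrow> 'k) set)" using f0 by simp
  qed
  hence b0: "red_betti K {v} E 0 = 0" using z0 unfolding red_betti_alt by simp
  have "total_red_betti K {v} E = (\<Sum>k\<le>Suc 0. red_betti K {v} E k)"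
    unfolding total_red_betti_def by simp
  also have "\<dots> = red_betti K {v} E 0 + red_betti K {v} E (Suc 0)" by simp
  finally show ?thesis using b0 b1 by simp
qed

lemma cone_zero:
  fixes K :: "'k::field itself"
  assumes "finite V" "v \<in> V" "\<forall>w\<in>V. w \<noteq> v \<longrightarrow> E v w \<and> E w v"
  shows "total_red_betti K V E = 0"
  using assms
proof (induction "card V" arbitrary: V rule: less_induct)
  case less
  show ?case
  proof (cases "V = {v}")
    case True thus ?thesis by (simp add: tb_single)
  next
    case False
    then obtain u where u: "u \<in> V" "u \<noteq> v" using less.prems by blast
    have "total_red_betti K (V - {u}) E = 0"
      using less.prems u card_Diff1_less[OF less.prems(1) u(1)] by (intro less.hyps) auto
    moreover have "total_red_betti K (Nb E V u) E = 0"
    proof (rule less.hyps)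
      have "Nb E V u \<subseteq> V - {u}" by (auto simp: Nb_def)
      thus "card (Nb E V u) < card V"
        using card_mono[of "V - {u}" "Nb E V u"] less.prems u card_Diff1_less[of V u] by auto
      show "finite (Nb E V u)" using less.prems by (auto simp: Nb_def)
      show "v \<in> Nb E V u" using less.prems u by (auto simp: Nb_def)
      show "\<forall>w\<in>Nb E V u. w \<noteq> v \<longrightarrow> E v w \<and> E w v" using less.prems by (auto simp: Nb_def)
    qed
    ultimately show ?thesis using key_ineq[OF less.prems(1) u(1), of K E] by simp
  qed
qed


definition I5free :: "nat set \<Rightarrow> (nat \<Rightarrow> nat \<Rightarrow> bool) \<Rightarrow> bool" where
  "I5free V E \<longleftrightarrow> \<not> (\<exists>f::nat\<Rightarrow>nat. inj_on f {..<5} \<and> f ` {..<5} \<subseteq> V \<and> (\<forall>a<5. \<forall>b<5. \<not> E (f a) (f b)))"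

lemma I5free_iff: "\<not> has_induced_copy I5_V I5_E V E \<longleftrightarrow> I5free V E"
proof -
  have h: "\<And>P. (\<forall>a\<in>{..<5::nat}. P a) = (\<forall>a<5. P a)" by auto
  show ?thesis unfolding has_induced_copy_def I5_V_def I5_E_def I5free_def h by simp
qed

lemma I5free_mono:
  assumes "I5free V E" "W \<subseteq> V" shows "I5free W E"
  unfolding I5free_def
proof
  assume "\<exists>f::nat\<Rightarrow>nat. inj_on f {..<5} \<and> f ` {..<5} \<subseteq> W \<and> (\<forall>a<5. \<forall>b<5. \<not> E (f a) (f b))"
  then obtain f :: "nat \<Rightarrow> nat" where f: "inj_on f {..<5}" "f ` {..<5} \<subseteq> W" "\<forall>a<5. \<forall>b<5. \<not> E (f a) (f b)"
    by blast
  have "f ` {..<5} \<subseteq> V" using f(2) assms(2) by (rule order_trans)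
  thus False using assms(1) f(1,3) unfolding I5free_def by blast
qed

fun branch :: "'k::field itself \<Rightarrow> (nat \<Rightarrow> nat \<Rightarrow> bool) \<Rightarrow> nat set \<Rightarrow> nat list \<Rightarrow> nat" where
  "branch K E V [] = 0"
| "branch K E V (u # us) = total_red_betti K (Nb E V u) E + branch K E (V - {u}) us"

lemma branch_ineq:
  fixes K :: "'k::field itself"
  assumes "finite V" "set us \<subseteq> V" "distinct us"
  shows "total_red_betti K V E \<le> total_red_betti K (V - set us) E + branch K E V us"
  using assms
proof (induction us arbitrary: V)
  case Nil thus ?case by simp
next
  case (Cons u us)
  have u: "u \<in> V" using Cons.prems by simp
  have "total_red_betti K (V - {u}) E \<le> total_red_betti K (V - {u} - set us) E + branch K E (V - {u}) us"
    using Cons.prems by (intro Cons.IH) auto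
  moreover have "V - {u} - set us = V - set (u # us)" by auto
  ultimately show ?case using key_ineq[OF Cons.prems(1) u, of K E] by simp
qed

lemma branch_le:
  fixes K :: "'k::field itself"
  assumes "W \<subseteq> V" "\<forall>u\<in>set us. \<forall>W'\<subseteq>V. real (total_red_betti K (Nb E W' u) E) \<le> B"
  shows "real (branch K E W us) \<le> real (length us) * B"
  using assms
proof (induction us arbitrary: W)
  case Nil thus ?case by simp
next
  case (Cons u us)
  have "real (branch K E (W - {u}) us) \<le> real (length us) * B"
    using Cons.prems by (intro Cons.IH) auto
  moreover have "real (total_red_betti K (Nb E W u) E) \<le> B" using Cons.prems by auto
  ultimately show ?case by (simp add: algebra_simps)
qed

definition lam :: real where "lam = root 4 3"

lemma lam_pos: "0 < lam" unfolding lam_def by (rule real_root_gt_zero) auto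

lemma lam4: "lam ^ 4 = 3" unfolding lam_def by (rule real_root_pow_pos2) auto

lemma lam_powr: "lam = 3 powr (1/4)" unfolding lam_def using root_powr_inverse[of 4 3] by simp

lemma lam_ge: "13/10 \<le> lam"
proof -
  have "(13/10::real) ^ 4 < 3" by (simp add: eval_nat_numeral)
  hence "(13/10::real) ^ 4 < lam ^ 4" by (simp only: lam4)
  thus ?thesis using power_less_imp_less_base[of "13/10" 4 lam] lam_pos by simp
qed

lemma lam_ge1: "1 \<le> lam" using lam_ge by simp

lemma nat_pow_ineq: "5 \<le> d \<Longrightarrow> (d::nat) ^ 4 \<le> 3 ^ (d + 1)"
proof (induction d rule: nat_induct_at_least)
  case base thus ?case by simp
next
  case (Suc d)
  have "5 * (d + 1) \<le> 6 * d" using Suc.hyps by simp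
  hence "(5 * (d + 1)) ^ 4 \<le> (6 * d) ^ 4" by (rule power_mono) simp
  moreover have "(5 * (d + 1)) ^ 4 = 625 * (d + 1) ^ 4" by (simp only: power_mult_distrib) simp
  moreover have "(6 * d) ^ 4 = 1296 * d ^ 4" by (simp only: power_mult_distrib) simp
  ultimately have "625 * (d + 1) ^ 4 \<le> 1296 * d ^ 4" by simp
  hence "(d + 1) ^ 4 \<le> 3 * d ^ 4" by linarith
  also have "\<dots> \<le> 3 * 3 ^ (d + 1)" using Suc.IH by simp
  finally show ?case by simp
qed

lemma delta_bound:
  assumes "d \<noteq> 4"
  shows "real d \<le> lam ^ (d + 1)"
proof -
  have "d ^ 4 \<le> 3 ^ (d + 1)"
  proof (cases "d \<le> 3")
    case True
    hence "d = 0 \<or> d = 1 \<or> d = 2 \<or> d = 3" by auto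
    thus ?thesis by auto
  next
    case False thus ?thesis using assms nat_pow_ineq by simp
  qed
  hence "real (d ^ 4) \<le> real (3 ^ (d + 1))" by (simp only: of_nat_le_iff)
  hence r: "real d ^ 4 \<le> 3 ^ (d + 1)" by simp
  have "(lam ^ (d + 1)) ^ 4 = (lam ^ 4) ^ (d + 1)"
    by (simp only: power_mult[symmetric] mult.commute)
  hence e: "(lam ^ (d + 1)) ^ 4 = 3 ^ (d + 1)" by (simp add: lam4)
  have "real d ^ 4 \<le> (lam ^ (d + 1)) ^ 4" using r e by simp
  thus ?thesis using power_le_imp_le_base[of "real d" 3 "lam ^ (d+1)"] lam_pos by simp
qed

lemma four_bound:
  assumes "6 \<le> n"
  shows "3 * lam ^ (n - 5) + lam ^ (n - 6) \<le> lam ^ n"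
proof -
  obtain m where n: "n = m + 6" using assms by (metis add.commute le_add_diff_inverse)
  have "lam ^ 6 = lam ^ 4 * lam ^ 2" by (simp add: power_add[symmetric])
  hence l6: "lam ^ 6 = 3 * lam ^ 2" by (simp add: lam4)
  have "3 * lam + 1 \<le> 3 * lam ^ 2"
  proof -
    have "3 * lam * (lam - 1) \<ge> 3 * (13/10) * (3/10)"
      using lam_ge by (intro mult_mono) auto
    thus ?thesis by (simp add: power2_eq_square algebra_simps)
  qed
  hence "lam ^ m * (3 * lam + 1) \<le> lam ^ m * lam ^ 6"
    using l6 lam_pos by (intro mult_left_mono) auto
  thus ?thesis unfolding n by (simp add: power_add algebra_simps)
qed


lemma tb_empty:
  fixes K :: "'k::field itself"
  shows "total_red_betti K {} E \<le> 1"
proof -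
  have f0: "faces {} E 0 = {{}}" by (rule faces_zero)
  have "Zs K {} E 0 \<subseteq> FV.span (ind ` faces {} E 0)"
    using Zs_chains[of K "{}" E 0] chains_span[of "{}" K E 0] by auto
  hence "FV.dim (Zs K {} E 0) \<le> card (ind ` faces {} E 0 :: (nat set \<Rightarrow> 'k) set)"
    by (rule FV.dim_le_card) (simp add: f0)
  hence "red_betti K {} E 0 \<le> 1" unfolding red_betti_alt using f0 by simp
  thus ?thesis unfolding total_red_betti_def by simp
qed

lemma upper:
  fixes K :: "'k::field itself"
  assumes "finite V" "\<forall>x y. E x y \<longrightarrow> E y x" "\<forall>x. \<not> E x x" "I5free V E"
  shows "real (total_red_betti K V E) \<le> lam ^ card V"
  using assms
proof (induction "card V" arbitrary: V rule: less_induct)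
  case less
  note fin = less.prems(1) and sym = less.prems(2) and irr = less.prems(3) and free = less.prems(4)
  show ?case
  proof (cases "V = {}")
    case True thus ?thesis using tb_empty[of K E] by simp
  next
    case False
    define M where "M u = {w\<in>V. w \<noteq> u \<and> \<not> E u w}" for u
    define n where "n = card V"
    have finM: "finite (M u)" for u using fin by (simp add: M_def)
    have NbM: "card (Nb E V u) + card (M u) + 1 = n" if u: "u \<in> V" for u
    proof -
      have un: "Nb E V u \<union> M u = V - {u}" using sym by (auto simp: Nb_def M_def)
      have di: "Nb E V u \<inter> M u = {}" by (auto simp: Nb_def M_def)
      have "card (Nb E V u) + card (M u) = card (V - {u})"
        unfolding un[symmetric] using fin di by (intro card_Un_disjoint[symmetric]) (auto simp: Nb_def M_def)
      also have "\<dots> = n - 1" using u fin by (simp add: n_def)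
      moreover have "0 < n" unfolding n_def using u fin by (auto simp: card_gt_0_iff)
      ultimately show ?thesis by linarith
    qed
    obtain v where v: "v \<in> V" "\<forall>u\<in>V. card (M v) \<le> card (M u)"
      using ex_has_least_nat[of "\<lambda>u. u \<in> V" _ "\<lambda>u. card (M u)"] False by blast
    define d where "d = card (M v)"
    have MV: "M v \<subseteq> V" by (auto simp: M_def)
    have vM: "v \<notin> M v" by (auto simp: M_def)
    have dn: "d + 1 \<le> n" using NbM[OF v(1)] d_def by simp
    have IHb: "real (total_red_betti K W E) \<le> lam ^ card W" if "W \<subseteq> V" "card W < n" for W
      using less.hyps[OF _ finite_subset[OF that(1) fin] sym irr I5free_mono[OF free that(1)]] that(2) n_def
      by simp
    have tm: "real (total_red_betti K (Nb E W u) E) \<le> lam ^ (n - 1 - d)" if "u \<in> V" "W \<subseteq> V" for u W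
    proof -
      have sub: "Nb E W u \<subseteq> Nb E V u" using that by (auto simp: Nb_def)
      have finNb: "finite (Nb E V u)" using fin by (simp add: Nb_def)
      have "d \<le> card (M u)" using v(2) that(1) d_def by simp
      hence "card (Nb E V u) \<le> n - 1 - d" using NbM[OF that(1)] by linarith
      hence c: "card (Nb E W u) \<le> n - 1 - d" using card_mono[OF finNb sub] by simp
      hence "card (Nb E W u) < n" using dn by simp
      moreover have "Nb E W u \<subseteq> V" using that by (auto simp: Nb_def)
      ultimately have "real (total_red_betti K (Nb E W u) E) \<le> lam ^ card (Nb E W u)" using IHb by blast
      also have "\<dots> \<le> lam ^ (n - 1 - d)" using c lam_ge1 by (intro power_increasing) auto
      finally show ?thesis .
    qed
    have cone: "total_red_betti K (V - M v) E = 0"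
    proof (rule cone_zero)
      show "finite (V - M v)" using fin by simp
      show "v \<in> V - M v" using v(1) vM by simp
      show "\<forall>w\<in>V - M v. w \<noteq> v \<longrightarrow> E v w \<and> E w v"
      proof (intro ballI impI)
        fix w assume "w \<in> V - M v" "w \<noteq> v"
        hence "E v w" by (simp add: M_def)
        thus "E v w \<and> E w v" using sym by blast
      qed
    qed
    have npos: "0 < lam ^ n" using lam_pos by simp
    show ?thesis
    proof (cases "d = 0")
      case True
      hence "M v = {}" using finM d_def by simp
      hence "total_red_betti K V E = 0" using cone by simp
      thus ?thesis using npos n_def by simp
    next
      case d0: False
      show ?thesis
      proof (cases "d = 4")
        case False
        obtain us where us: "set us = M v" "distinct us" using finite_distinct_list[OF finM] by blast
        have len: "length us = d" using distinct_card[OF us(2)] us(1) d_def by simp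
        have "total_red_betti K V E \<le> total_red_betti K (V - set us) E + branch K E V us"
          using branch_ineq[OF fin _ us(2)] us(1) MV by simp
        hence "real (total_red_betti K V E) \<le> real (branch K E V us)" using cone us(1) by simp
        also have "\<dots> \<le> real (length us) * lam ^ (n - 1 - d)"
          using tm us(1) MV by (intro branch_le[of V V]) auto
        also have "\<dots> \<le> lam ^ (d + 1) * lam ^ (n - 1 - d)"
          using delta_bound[OF False] len lam_pos by (intro mult_right_mono) auto
        also have "\<dots> = lam ^ (d + 1 + (n - 1 - d))" by (rule power_add[symmetric])
        also have "d + 1 + (n - 1 - d) = n" using dn by simp
        finally show ?thesis using n_def by simp
      next
        case True
        have "\<exists>u1\<in>M v. \<exists>u2\<in>M v. u1 \<noteq> u2 \<and> E u1 u2"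
        proof (rule ccontr)
          assume "\<not> (\<exists>u1\<in>M v. \<exists>u2\<in>M v. u1 \<noteq> u2 \<and> E u1 u2)"
          hence indep: "\<forall>x\<in>M v. \<forall>y\<in>M v. x \<noteq> y \<longrightarrow> \<not> E x y" by blast
          obtain l where l: "set l = M v" "distinct l" using finite_distinct_list[OF finM] by blast
          have ll: "length l = 4" using distinct_card[OF l(2)] l(1) d_def True by simp
          let ?f = "nth (v # l)"
          have dl: "distinct (v # l)" using l vM by simp
          have inj: "inj_on ?f {..<5}" using dl ll by (intro inj_on_nth) auto
          have st: "?f i \<in> insert v (M v)" if "i < 5" for i
            using that ll l(1) nth_mem[of i "v # l"] by simp
          have all: "\<forall>x\<in>insert v (M v). \<forall>y\<in>insert v (M v). \<not> E x y"
          proof (intro ballI)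
            fix x y assume x: "x \<in> insert v (M v)" and y: "y \<in> insert v (M v)"
            show "\<not> E x y"
            proof (cases "x = y")
              case True thus ?thesis using irr by simp
            next
              case xy: False
              show ?thesis
              proof (cases "x = v")
                case True
                hence "y \<in> M v" using y xy by simp
                thus ?thesis using True by (simp add: M_def)
              next
                case xv: False
                hence xM: "x \<in> M v" using x by simp
                show ?thesis
                proof (cases "y = v")
                  case True
                  have "\<not> E v x" using xM by (simp add: M_def)
                  thus ?thesis using True sym by blast
                next
                  case False
                  hence "y \<in> M v" using y by simp
                  thus ?thesis using indep xM xy by blast
                qed
              qed
            qed
          qed
          have "\<exists>f::nat\<Rightarrow>nat. inj_on f {..<5} \<and> f ` {..<5} \<subseteq> V \<and> (\<forall>a<5. \<forall>b<5. \<not> E (f a) (f b))"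
          proof (intro exI conjI)
            show "inj_on ?f {..<5}" by (rule inj)
            show "?f ` {..<5} \<subseteq> V"
            proof
              fix x assume "x \<in> ?f ` {..<5}"
              then obtain i where "i < 5" "x = ?f i" by auto
              thus "x \<in> V" using st[of i] v(1) MV by auto
            qed
            show "\<forall>a<5. \<forall>b<5. \<not> E (?f a) (?f b)"
            proof (intro allI impI)
              fix a b :: nat assume "a < 5" "b < 5"
              hence "?f a \<in> insert v (M v)" "?f b \<in> insert v (M v)" using st by auto
              thus "\<not> E (?f a) (?f b)" using all by blast
            qed
          qed
          thus False using free unfolding I5free_def by blast
        qed
        then obtain u1 u2 where u: "u1 \<in> M v" "u2 \<in> M v" "u1 \<noteq> u2" "E u1 u2" by blast
        obtain rest where r: "set rest = M v - {u1, u2}" "distinct rest"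
          using finite_distinct_list[of "M v - {u1, u2}"] finM by blast
        have "card (M v - {u1, u2}) = 2" using u True d_def finM by (simp add: card_Diff_subset)
        hence lr: "length rest = 2" using distinct_card[OF r(2)] r(1) by simp
        let ?us = "u1 # u2 # rest"
        have sus: "set ?us = M v" using r u by auto
        have dus: "distinct ?us" using r u by auto
        have "total_red_betti K V E \<le> total_red_betti K (V - set ?us) E + branch K E V ?us"
          using branch_ineq[OF fin _ dus, of K E] sus MV by (simp only:)
        hence A: "total_red_betti K V E \<le> total_red_betti K (Nb E V u1) E + total_red_betti K (Nb E (V - {u1}) u2) E
                  + branch K E (V - {u1} - {u2}) rest"
          using cone sus by simp
        have u1V: "u1 \<in> V" and u2V: "u2 \<in> V" using u MV by auto
        have B1: "real (total_red_betti K (Nb E V u1) E) \<le> lam ^ (n - 5)"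
          using tm[OF u1V subset_refl] True by simp
        have nb_eq: "Nb E (V - {u1}) u2 = Nb E V u2 - {u1}" by (auto simp: Nb_def)
        have u1N: "u1 \<in> Nb E V u2" using u u1V sym by (auto simp: Nb_def)
        have finNb: "finite (Nb E V u2)" using fin by (simp add: Nb_def)
        have "4 \<le> card (M u2)" using v(2) u2V d_def True by simp
        hence c2: "card (Nb E V u2) \<le> n - 5" using NbM[OF u2V] by linarith
        have "Nb E V u2 \<noteq> {}" using u1N by auto
        hence c2pos: "card (Nb E V u2) \<ge> 1" using finNb by (simp add: Suc_le_eq card_gt_0_iff)
        have n6: "6 \<le> n" using c2 c2pos by simp
        have c3: "card (Nb E (V - {u1}) u2) \<le> n - 6" unfolding nb_eq using c2 u1N finNb by simp
        have "real (total_red_betti K (Nb E (V - {u1}) u2) E) \<le> lam ^ card (Nb E (V - {u1}) u2)"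
          using IHb[of "Nb E (V - {u1}) u2"] c3 n6 by (auto simp: Nb_def)
        also have "\<dots> \<le> lam ^ (n - 6)" using c3 lam_ge1 by (intro power_increasing) auto
        finally have B2: "real (total_red_betti K (Nb E (V - {u1}) u2) E) \<le> lam ^ (n - 6)" .
        have B3: "real (branch K E (V - {u1} - {u2}) rest) \<le> real (length rest) * lam ^ (n - 5)"
          using tm r(1) MV True by (intro branch_le[of _ V]) auto
        have "real (total_red_betti K V E) \<le> lam ^ (n - 5) + lam ^ (n - 6) + 2 * lam ^ (n - 5)"
        proof -
          have A': "real (total_red_betti K V E) \<le> real (total_red_betti K (Nb E V u1) E)
             + real (total_red_betti K (Nb E (V - {u1}) u2) E) + real (branch K E (V - {u1} - {u2}) rest)"
            using A by (simp only: of_nat_add[symmetric] of_nat_le_iff)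
          have B3': "real (branch K E (V - {u1} - {u2}) rest) \<le> 2 * lam ^ (n - 5)" using B3 lr by simp
          show ?thesis using A' B1 B2 B3' by linarith
        qed
        also have "\<dots> \<le> lam ^ n" using four_bound[OF n6] by simp
        finally show ?thesis using n_def by simp
      qed
    qed
  qed
qed


definition Vm :: "nat \<Rightarrow> nat set" where "Vm m = {..<4*m}"
definition Em :: "nat \<Rightarrow> nat \<Rightarrow> nat \<Rightarrow> bool" where
  "Em m x y \<longleftrightarrow> x < 4*m \<and> y < 4*m \<and> x div 4 \<noteq> y div 4"

lemma blk: "(x::nat) div 4 = j \<longleftrightarrow> 4*j \<le> x \<and> x < 4*j+4" by auto

lemma faces_Vm: "S \<in> faces (Vm m) (Em m) k \<longleftrightarrow>
    finite S \<and> S \<subseteq> {..<4*m} \<and> card S = k \<and> inj_on (\<lambda>x. x div 4) S"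
  unfolding faces_def Vm_def Em_def inj_on_def by auto

lemma faces_Vm_card:
  assumes "S \<in> faces (Vm m) (Em m) k" shows "k \<le> m"
proof -
  have S: "finite S" "S \<subseteq> {..<4*m}" "card S = k" "inj_on (\<lambda>x. x div 4) S"
    using assms faces_Vm by auto
  have "(\<lambda>x. x div 4) ` S \<subseteq> {..<m}" using S(2) by auto
  hence "card ((\<lambda>x. x div 4) ` S) \<le> card {..<m}" by (rule card_mono[OF finite_lessThan])
  hence "card ((\<lambda>x. x div 4) ` S) \<le> m" by simp
  thus ?thesis using card_image[OF S(4)] S(3) by simp
qed

lemma simple_Vm: "simple_graph (Vm m) (Em m)"
  unfolding simple_graph_def Vm_def Em_def by auto

lemma I5free_Vm: "I5free (Vm m) (Em m)"
  unfolding I5free_def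
proof
  assume "\<exists>f::nat\<Rightarrow>nat. inj_on f {..<5} \<and> f ` {..<5} \<subseteq> Vm m \<and> (\<forall>a<5. \<forall>b<5. \<not> Em m (f a) (f b))"
  then obtain f :: "nat \<Rightarrow> nat" where f: "inj_on f {..<5}" "f ` {..<5} \<subseteq> Vm m"
     "\<forall>a<5. \<forall>b<5. \<not> Em m (f a) (f b)" by blast
  define q where "q = f 0 div 4"
  have "f ` {..<5} \<subseteq> {4*q..<4*q+4}"
  proof
    fix x assume "x \<in> f ` {..<5}"
    then obtain a where a: "a < 5" "x = f a" by auto
    have fa: "f a \<in> f ` {..<5}" and f0: "f 0 \<in> f ` {..<5}" using a(1) by auto
    have "f a \<in> Vm m" "f 0 \<in> Vm m" using subsetD[OF f(2) fa] subsetD[OF f(2) f0] by auto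
    hence "f a < 4*m" "f 0 < 4*m" by (auto simp: Vm_def)
    moreover have "\<not> Em m (f a) (f 0)" using f(3) a(1) by simp
    ultimately have "f a div 4 = q" unfolding q_def Em_def by simp
    thus "x \<in> {4*q..<4*q+4}" using a(2) blk by auto
  qed
  hence "card (f ` {..<5}) \<le> card {4*q..<4*q+4}" by (rule card_mono[OF finite_atLeastLessThan])
  hence "card (f ` {..<5}) \<le> 4" by simp
  moreover have "card (f ` {..<5}) = 5" using card_image[OF f(1)] by simp
  ultimately show False by simp
qed

definition good :: "(nat \<Rightarrow> nat) \<Rightarrow> nat \<Rightarrow> bool" where
  "good c x \<longleftrightarrow> x mod 4 = 0 \<or> x mod 4 = c (x div 4)"

definition zc :: "'k::field itself \<Rightarrow> nat \<Rightarrow> (nat \<Rightarrow> nat) \<Rightarrow> nat set \<Rightarrow> 'k" where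
  "zc K m c S = (if S \<in> faces (Vm m) (Em m) m \<and> (\<forall>x\<in>S. good c x)
      then (-1) ^ card {x\<in>S. x mod 4 \<noteq> 0} else 0)"

definition topc :: "nat \<Rightarrow> (nat \<Rightarrow> nat) \<Rightarrow> nat set" where
  "topc m c = (\<lambda>i. 4*i + c i) ` {..<m}"

definition CC :: "nat \<Rightarrow> (nat \<Rightarrow> nat) set" where
  "CC m = PiE {..<m} (\<lambda>_. {1,2,3})"

lemma card_CC: "card (CC m) = 3 ^ m"
  unfolding CC_def by (simp add: card_PiE numeral_3_eq_3)

lemma zc_chains: "zc K m c \<in> chains K (Vm m) (Em m) m"
  by (auto simp: chains_def zc_def)

lemma topc_face:
  assumes c: "c \<in> CC m"
  shows "topc m c \<in> faces (Vm m) (Em m) m" "\<forall>x\<in>topc m c. good c x"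
proof -
  have ci: "c i \<in> {1,2,3}" if "i < m" for i using c that by (auto simp: CC_def)
  have dv: "(4*i + c i) div 4 = i" "(4*i + c i) mod 4 = c i" if "i < m" for i
    using ci[OF that] by auto
  have inj: "inj_on (\<lambda>i. 4*i + c i) {..<m}" by (rule inj_onI) (metis dv(1) lessThan_iff)
  have "inj_on (\<lambda>x. x div 4) (topc m c)"
  proof (rule inj_onI)
    fix x y assume "x \<in> topc m c" "y \<in> topc m c" and xy: "x div 4 = y div 4"
    then obtain i i' where i: "i < m" "x = 4*i + c i" "i' < m" "y = 4*i' + c i'"
      by (auto simp: topc_def)
    have "i = i'" using xy i dv(1)[of i] dv(1)[of i'] by simp
    thus "x = y" using i by simp
  qed
  moreover have "topc m c \<subseteq> {..<4*m}"
  proof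
    fix x assume "x \<in> topc m c"
    then obtain i where i: "i < m" "x = 4*i + c i" by (auto simp: topc_def)
    have "c i \<le> 3" using ci[OF i(1)] by auto
    thus "x \<in> {..<4*m}" using i by simp
  qed
  moreover have "card (topc m c) = m" unfolding topc_def using card_image[OF inj] by simp
  ultimately show "topc m c \<in> faces (Vm m) (Em m) m"
    unfolding faces_Vm by (simp add: topc_def)
  show "\<forall>x\<in>topc m c. good c x"
  proof
    fix x assume "x \<in> topc m c"
    then obtain i where i: "i < m" "x = 4*i + c i" by (auto simp: topc_def)
    show "good c x" unfolding good_def using dv[OF i(1)] i(2) by simp
  qed
qed

lemma zc_top:
  assumes c: "c \<in> CC m"
  shows "zc K m c (topc m c) \<noteq> 0"
  using topc_face[OF c] by (simp add: zc_def)

lemma zc_top_other: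
  assumes c: "c \<in> CC m" and c': "c' \<in> CC m" and ne: "c' \<noteq> c"
  shows "zc K m c' (topc m c) = 0"
proof -
  have "\<exists>i<m. c i \<noteq> c' i"
  proof (rule ccontr)
    assume "\<not> (\<exists>i<m. c i \<noteq> c' i)"
    hence "c = c'" using c c' unfolding CC_def by (intro extensionalityI[of _ "{..<m}"]) (auto simp: PiE_iff)
    thus False using ne by simp
  qed
  then obtain i where i: "i < m" "c i \<noteq> c' i" by blast
  have ci: "c i \<in> {1,2,3}" using c i by (auto simp: CC_def)
  have "4*i + c i \<in> topc m c" using i by (auto simp: topc_def)
  moreover have "\<not> good c' (4*i + c i)" using ci i by (auto simp: good_def)
  ultimately show ?thesis by (auto simp: zc_def)
qed


lemma zc_cycle:
  fixes K :: "'k::field itself"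
  assumes c: "c \<in> CC m"
  shows "boundary (Vm m) (Em m) m (zc K m c) = 0"
proof
  fix T
  show "boundary (Vm m) (Em m) m (zc K m c) T = 0 T"
  proof (cases "m = 0 \<or> T \<notin> faces (Vm m) (Em m) (m - 1)")
    case True thus ?thesis by (auto simp: boundary_def)
  next
    case False
    hence m0: "m \<noteq> 0" and T: "T \<in> faces (Vm m) (Em m) (m - 1)" by auto
    have Tp: "finite T" "T \<subseteq> {..<4*m}" "card T = m - 1" "inj_on (\<lambda>x. x div 4) T"
      using T unfolding faces_Vm by auto
    let ?A = "{w \<in> Vm m - T. insert w T \<in> faces (Vm m) (Em m) m}"
    let ?t = "\<lambda>w. (-1::'k) ^ card {u\<in>T. u < w} * zc K m c (insert w T)"
    have bd: "boundary (Vm m) (Em m) m (zc K m c) T = sum ?t ?A"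
      unfolding boundary_def using m0 T by (simp only: if_True if_False simp_thms)
    have finA: "finite ?A" by (simp add: Vm_def)
    show ?thesis
    proof (cases "\<forall>x\<in>T. good c x")
      case False
      have "sum ?t ?A = 0"
      proof (rule sum.neutral, rule ballI)
        fix w assume "w \<in> ?A"
        have "\<not> (\<forall>x\<in>insert w T. good c x)" using False by auto
        thus "?t w = 0" by (simp add: zc_def)
      qed
      thus ?thesis using bd by simp
    next
      case Tg: True
      let ?B = "(\<lambda>x. x div 4) ` T"
      have Bsub: "?B \<subseteq> {..<m}"
      proof
        fix y assume "y \<in> ?B"
        then obtain x where x: "x \<in> T" "y = x div 4" by auto
        have "x < 4*m" using x(1) Tp(2) by auto
        thus "y \<in> {..<m}" using x(2) by auto
      qed
      have cB: "card ?B = m - 1" using card_image[OF Tp(4)] Tp(3) by simp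
      have "card ({..<m} - ?B) = m - (m - 1)"
        using card_Diff_subset[OF finite_imageI[OF Tp(1)] Bsub] cB by simp
      hence "card ({..<m} - ?B) = 1" using m0 by simp
      then obtain j where j: "{..<m} - ?B = {j}" by (rule card_1_singletonE)
      have jm: "j < m" "j \<notin> ?B" using j by auto
      have notj: "u div 4 \<noteq> j" if "u \<in> T" for u using that jm(2) by auto
      have cj: "c j \<in> {1,2,3}" using c jm(1) by (auto simp: CC_def)
      define w1 where "w1 = 4*j"
      define w2 where "w2 = 4*j + c j"
      have w1d: "w1 div 4 = j" "w1 mod 4 = 0" by (auto simp: w1_def)
      have w2d: "w2 div 4 = j" "w2 mod 4 = c j" using cj by (auto simp: w2_def)
      have w12: "w1 \<noteq> w2" using cj by (auto simp: w1_def w2_def)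
      have inA: "w \<in> ?A \<and> insert w T \<in> faces (Vm m) (Em m) m" if wj: "w div 4 = j" for w
      proof -
        have wT: "w \<notin> T" using wj notj by blast
        have "w < 4*j + 4" using wj blk by blast
        hence wV: "w < 4*m" using jm(1) by linarith
        have "w div 4 \<notin> (\<lambda>x. x div 4) ` (T - {w})"
        proof
          assume "w div 4 \<in> (\<lambda>x. x div 4) ` (T - {w})"
          then obtain x where x: "x \<in> T" "w div 4 = x div 4" by auto
          thus False using notj[OF x(1)] wj by simp
        qed
        hence "inj_on (\<lambda>x. x div 4) (insert w T)" using Tp(4) by (simp add: inj_on_insert)
        moreover have "card (insert w T) = m" using Tp(1,3) wT m0 by simp
        ultimately have "insert w T \<in> faces (Vm m) (Em m) m"
          unfolding faces_Vm using Tp(1,2) wV by simp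
        thus ?thesis using wT wV by (simp add: Vm_def)
      qed
      have zero_other: "?t w = 0" if "w \<in> ?A - {w1, w2}" for w
      proof -
        have f: "insert w T \<in> faces (Vm m) (Em m) m" and wT: "w \<notin> T" and wn: "w \<noteq> w1" "w \<noteq> w2"
          using that by auto
        from f have inj: "inj_on (\<lambda>x. x div 4) (insert w T)" and wV: "w < 4*m"
          unfolding faces_Vm by auto
        have "T - {w} = T" using wT by simp
        hence "w div 4 \<notin> ?B" using inj by (simp add: inj_on_insert)
        moreover have "w div 4 < m" using wV by auto
        ultimately have wj: "w div 4 = j" using j by blast
        have wdm: "w = 4 * (w div 4) + w mod 4" by simp
        have "\<not> good c w"
        proof
          assume "good c w"
          hence "w mod 4 = 0 \<or> w mod 4 = c j" using wj by (simp add: good_def)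
          thus False using wdm wj wn unfolding w1_def w2_def by auto
        qed
        thus "?t w = 0" by (simp add: zc_def)
      qed
      have "sum ?t ?A = sum ?t {w1, w2}"
      proof (rule sum.mono_neutral_right[OF finA])
        show "{w1, w2} \<subseteq> ?A" using inA w1d(1) w2d(1) by blast
        show "\<forall>i\<in>?A - {w1, w2}. ?t i = 0" using zero_other by blast
      qed
      also have "\<dots> = ?t w1 + ?t w2" using w12 by simp
      also have "\<dots> = 0"
      proof -
        have sgn: "{u\<in>T. u < w1} = {u\<in>T. u < w2}"
        proof (intro Collect_cong conj_cong refl)
          fix u assume u: "u \<in> T"
          have "\<not> (4*j \<le> u \<and> u < 4*j + 4)" using notj[OF u] blk by blast
          thus "u < w1 \<longleftrightarrow> u < w2" using cj unfolding w1_def w2_def by auto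
        qed
        define N where "N = card {x\<in>T. x mod 4 \<noteq> 0}"
        have f1: "insert w1 T \<in> faces (Vm m) (Em m) m" using inA w1d(1) by blast
        have f2: "insert w2 T \<in> faces (Vm m) (Em m) m" using inA w2d(1) by blast
        have w2T: "w2 \<notin> T" using notj w2d(1) by blast
        have g1: "\<forall>x\<in>insert w1 T. good c x" using Tg w1d by (simp add: good_def)
        have g2: "\<forall>x\<in>insert w2 T. good c x" using Tg w2d by (simp add: good_def)
        have s1: "{x\<in>insert w1 T. x mod 4 \<noteq> 0} = {x\<in>T. x mod 4 \<noteq> 0}" using w1d by auto
        have s2: "{x\<in>insert w2 T. x mod 4 \<noteq> 0} = insert w2 {x\<in>T. x mod 4 \<noteq> 0}" using w2d cj by auto
        have z1: "zc K m c (insert w1 T) = (-1) ^ N" using f1 g1 s1 by (simp add: zc_def N_def)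
        have z2: "zc K m c (insert w2 T) = (-1) ^ Suc N"
          using f2 g2 s2 w2T Tp(1) by (simp add: zc_def N_def)
        show ?thesis unfolding z1 z2 sgn by simp
      qed
      finally show ?thesis using bd by simp
    qed
  qed
qed

lemma lower:
  fixes K :: "'k::field itself"
  shows "3 ^ m \<le> total_red_betti K (Vm m) (Em m)"
proof -
  have fin: "finite (Vm m)" by (simp add: Vm_def)
  let ?Z = "zc K m ` CC m"
  have inj: "inj_on (zc K m) (CC m)"
  proof (rule inj_onI)
    fix c c' assume c: "c \<in> CC m" and c': "c' \<in> CC m" and eq: "zc K m c = zc K m c'"
    show "c = c'"
    proof (rule ccontr)
      assume "c \<noteq> c'"
      hence "zc K m c' (topc m c) = 0" using zc_top_other[OF c c'] by auto
      thus False using zc_top[OF c, of K] eq by simp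
    qed
  qed
  have cZ: "card ?Z = 3 ^ m" using card_image[OF inj] card_CC by simp
  have sub: "?Z \<subseteq> Zs K (Vm m) (Em m) m"
    using zc_chains zc_cycle by (auto simp: Zs_def)
  have indep: "FV.independent ?Z"
    unfolding FV.independent_explicit_module
  proof (intro allI impI)
    fix t u v
    assume t: "finite t" "t \<subseteq> ?Z" "(\<Sum>v\<in>t. fscale (u v) v) = 0" "v \<in> t"
    obtain c where c: "c \<in> CC m" "v = zc K m c" using t(2,4) by auto
    have "(\<Sum>v\<in>t. fscale (u v) v) (topc m c) = 0" using t(3) by simp
    hence "(\<Sum>w\<in>t. u w * w (topc m c)) = 0" by (simp add: sum_fun_apply)
    moreover have "(\<Sum>w\<in>t. u w * w (topc m c)) = u v * v (topc m c)"
    proof (rule sum.remove[OF t(1) t(4), THEN trans])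
      have "(\<Sum>w\<in>t - {v}. u w * w (topc m c)) = 0"
      proof (rule sum.neutral, rule ballI)
        fix w assume w: "w \<in> t - {v}"
        then obtain c' where c': "c' \<in> CC m" "w = zc K m c'" using t(2) by auto
        have "c' \<noteq> c" using w c c' by auto
        thus "u w * w (topc m c) = 0" using zc_top_other[OF c(1) c'(1), of K] c' by simp
      qed
      thus "u v * v (topc m c) + (\<Sum>w\<in>t - {v}. u w * w (topc m c)) = u v * v (topc m c)" by simp
    qed
    ultimately have "u v * v (topc m c) = 0" by simp
    thus "u v = 0" using zc_top[OF c(1), of K] c(2) by simp
  qed
  have "card ?Z \<le> FV.dim (Zs K (Vm m) (Em m) m)"
  proof (rule FV.indep_card_le_dim_fin[OF sub indep])
    show "Zs K (Vm m) (Em m) m \<subseteq> FV.span (ind ` faces (Vm m) (Em m) m)"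
      using Zs_chains[of K "Vm m" "Em m" m] chains_span[OF fin, of K "Em m" m] by auto
    show "finite (ind ` faces (Vm m) (Em m) m :: (nat set \<Rightarrow> 'k) set)"
      using faces_finite[OF fin] by simp
  qed
  hence Zd: "3 ^ m \<le> FV.dim (Zs K (Vm m) (Em m) m)" using cZ by simp
  have "faces (Vm m) (Em m) (Suc m) = {}"
  proof (rule equals0I)
    fix S assume "S \<in> faces (Vm m) (Em m) (Suc m)"
    hence "Suc m \<le> m" by (rule faces_Vm_card)
    thus False by simp
  qed
  hence ch: "chains K (Vm m) (Em m) (Suc m) = {0}" by (auto simp: chains_def)
  have b0: "boundary (Vm m) (Em m) (Suc m) (0::nat set \<Rightarrow> 'k) = 0" by (rule ext) (simp add: boundary_def)
  have "Bs K (Vm m) (Em m) m = {0}" unfolding Bs_def ch using b0 by simp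
  hence "Bs K (Vm m) (Em m) m \<subseteq> FV.span {}" by simp
  hence "FV.dim (Bs K (Vm m) (Em m) m) \<le> card ({} :: (nat set \<Rightarrow> 'k) set)"
    by (intro FV.dim_le_card) auto
  hence rb: "3 ^ m \<le> red_betti K (Vm m) (Em m) m" using Zd unfolding red_betti_alt by simp
  have cV: "card (Vm m) = 4 * m" by (simp add: Vm_def)
  have "red_betti K (Vm m) (Em m) m \<le> total_red_betti K (Vm m) (Em m)"
    unfolding total_red_betti_def cV by (rule member_le_sum) simp_all
  thus ?thesis using rb by simp
qed


lemma bH_bounds:
  fixes K :: "'k::field itself"
  shows "real (bH K I5_V I5_E n) \<le> lam ^ n" "3 ^ (n div 4) \<le> bH K I5_V I5_E n"
proof -
  let ?A = "{total_red_betti K V E | V E. V \<subseteq> {..<n} \<and> simple_graph V E \<and> \<not> has_induced_copy I5_V I5_E V E}"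
  have ub: "real x \<le> lam ^ n" if "x \<in> ?A" for x
  proof -
    from that obtain V E where V: "x = total_red_betti K V E" "V \<subseteq> {..<n}" "simple_graph V E"
      "\<not> has_induced_copy I5_V I5_E V E" by blast
    have fin: "finite V" using V(2) finite_subset by blast
    have sg: "\<forall>x y. E x y \<longrightarrow> E y x" "\<forall>x. \<not> E x x" using V(3) by (auto simp: simple_graph_def)
    have "real x \<le> lam ^ card V" using upper[OF fin sg I5free_iff[THEN iffD1, OF V(4)], of K] V(1) by simp
    also have "card V \<le> n" using card_mono[OF finite_lessThan V(2)] by simp
    hence "lam ^ card V \<le> lam ^ n" using lam_ge1 by (intro power_increasing) auto
    finally show ?thesis .
  qed
  have fin: "finite ?A"
    unfolding finite_nat_set_iff_bounded_le
  proof (intro exI ballI)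
    fix x assume "x \<in> ?A"
    hence "real x \<le> real (nat \<lceil>lam ^ n\<rceil>)" using ub real_nat_ceiling_ge order_trans by blast
    thus "x \<le> nat \<lceil>lam ^ n\<rceil>" by (simp only: of_nat_le_iff)
  qed
  have "Vm (n div 4) \<subseteq> {..<n}" unfolding Vm_def by auto
  hence mem: "total_red_betti K (Vm (n div 4)) (Em (n div 4)) \<in> ?A"
    using simple_Vm I5free_Vm I5free_iff by blast
  have ne: "?A \<noteq> {}" using mem by blast
  show "real (bH K I5_V I5_E n) \<le> lam ^ n" unfolding bH_def using Max_in[OF fin ne] ub by blast
  have "total_red_betti K (Vm (n div 4)) (Em (n div 4)) \<le> bH K I5_V I5_E n"
    unfolding bH_def using Max_ge[OF fin mem] .
  thus "3 ^ (n div 4) \<le> bH K I5_V I5_E n" using lower[of "n div 4" K] by simp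
qed

theorem corollary6p2:
  shows "(\<lambda>n. root n (real (bH TYPE('k::field) I5_V I5_E n))) \<longlonglongrightarrow> 3 powr (1/4)"
proof -
  let ?f = "\<lambda>n. root n (real (bH TYPE('k) I5_V I5_E n))"
  let ?g = "\<lambda>n. lam / root n (lam ^ 3)"
  have l3: "0 < lam ^ 3" using lam_pos by simp
  have "?g \<longlonglongrightarrow> lam / 1"
    by (rule tendsto_divide[OF tendsto_const LIMSEQ_root_const[OF l3]]) simp
  hence g: "?g \<longlonglongrightarrow> lam" by simp
  have ev1: "eventually (\<lambda>n. ?g n \<le> ?f n) sequentially"
  proof (rule eventually_sequentiallyI[of 3])
    fix n :: nat assume n: "3 \<le> n"
    have "n = 4 * (n div 4) + n mod 4" by simp
    moreover have "n mod 4 < 4" by simp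
    ultimately have e: "n - 3 \<le> 4 * (n div 4)" by linarith
    have "lam ^ (n - 3) \<le> lam ^ (4 * (n div 4))" using e lam_ge1 by (intro power_increasing) auto
    also have "\<dots> = (lam ^ 4) ^ (n div 4)" by (rule power_mult)
    also have "\<dots> = 3 ^ (n div 4)" by (simp add: lam4)
    also have "\<dots> \<le> real (bH TYPE('k) I5_V I5_E n)"
      using bH_bounds(2)[of n "TYPE('k)"] by (metis of_nat_le_iff of_nat_numeral of_nat_power)
    finally have le: "lam ^ (n - 3) \<le> real (bH TYPE('k) I5_V I5_E n)" .
    have npos: "0 < n" using n by simp
    have "root n (lam ^ (n - 3)) * root n (lam ^ 3) = root n (lam ^ (n - 3) * lam ^ 3)"
      by (rule real_root_mult[symmetric])
    also have "lam ^ (n - 3) * lam ^ 3 = lam ^ n" using n by (simp add: power_add[symmetric])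
    also have "root n (lam ^ n) = lam" using npos lam_pos by (simp add: real_root_power_cancel)
    finally have "root n (lam ^ (n - 3)) * root n (lam ^ 3) = lam" .
    moreover have "0 < root n (lam ^ 3)" using npos l3 by (rule real_root_gt_zero)
    ultimately have "?g n = root n (lam ^ (n - 3))" by (simp add: field_simps)
    also have "\<dots> \<le> ?f n" using npos le by (rule real_root_le_mono)
    finally show "?g n \<le> ?f n" .
  qed
  have ev2: "eventually (\<lambda>n. ?f n \<le> lam) sequentially"
  proof (rule eventually_sequentiallyI[of 1])
    fix n :: nat assume "1 \<le> n"
    hence npos: "0 < n" by simp
    have "?f n \<le> root n (lam ^ n)"
      using npos bH_bounds(1)[of "TYPE('k)" n] by (rule real_root_le_mono)
    also have "\<dots> = lam" using npos lam_pos by (simp add: real_root_power_cancel)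
    finally show "?f n \<le> lam" .
  qed
  have "?f \<longlonglongrightarrow> lam" by (rule tendsto_sandwich[OF ev1 ev2 g tendsto_const])
  thus ?thesis using lam_powr by simp
qed

end
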